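(* Let $\epsilon\in(0,1)$ and let $W=[w_1,\dots,w_n]$ be a mass vector ($w_i\ge0$, $\sum_i w_i=1$) such that for every $\theta\in\Theta$ and every $\lambda\in[\kappa(\theta),\tau(\theta)]$, $$(1-\epsilon)H(\theta,\lambda)\le \tilde H(\theta,\lambda)\le (1+\epsilon)H(\theta,\lambda).$$ Then with $\tilde{\mathbb P}_n=\sum_i w_i\delta_{\xi_i}$ we have, for every $\theta\in\Theta$, $$(1-\epsilon)R^{\mathbb P_n}_{\sigma,p}(\theta)\le R^{\tilde{\mathbb P}_n}_{\sigma,p}(\theta)\le (1+\epsilon)R^{\mathbb P_n}_{\sigma,p}(\theta).$$
   Context: Setting: $\Xi=\mathbb X\times\mathbb Y$ with $\mathbb X\subseteq\mathbb R^m$, $\mathbb Y\subseteq\mathbb R$, metric $\mathtt d((x,y),(x',y'))=\|x-x'\|+\frac{\gamma}{2}|y-y'|$ ($\|\cdot\|$ a norm on $\mathbb R^m$, $\gamma>0$), $(\Xi,\mathtt d)$ complete. Fix $p\ge1$, $\sigma>0$, data $\xi_1,\dots,\xi_n\in\Xi$ with empirical distribution $\mathbb P_n=\frac1n\sum_i\delta_{\xi_i}$. Loss $\ell:\mathbb R^d\times\Xi\to[0,\infty)$, feasible set $\Theta\subseteq\mathbb R^d$. Assumption: $\ell(\theta,\cdot)$ continuous for each $\theta\in\Theta$, and there are a positive continuous $\mathtt C(\theta)$ and $\xi_0\in\Xi$ with $\ell(\theta,\xi)\le\mathtt C(\theta)(1+\mathtt d^p(\xi,\xi_0))$. The $p$-Wasserstein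 distance is $W_p(\mathbb P,\mathbb P')=(\inf_{\pi\in\Pi(\mathbb P,\mathbb P')}\int\mathtt d^p(\xi,\xi')\,\pi(d\xi,d\xi'))^{1/p}$; $\mathbb B_{\sigma,p}(\mathbb Q)$ is the set of Borel probability measures on $\Xi$ at $W_p$-distance at most $\sigma$ from $\mathbb Q$; the worst-case risk is $R^{\mathbb Q}_{\sigma,p}(\theta)=\sup_{\mathbb Q'\in\mathbb B_{\sigma,p}(\mathbb Q)}\mathbb E^{\mathbb Q'}[\ell(\theta,\xi)]$. Define $h(\theta,\lambda,\xi)=\sup_{\zeta\in\Xi}\{\ell(\theta,\zeta)-\lambda\mathtt d^p(\zeta,\xi)\}$, $h_i(\theta,\lambda)=h(\theta,\lambda,\xi_i)$, $H(\theta,\lambda)=\frac1n\sum_ih_i(\theta,\lambda)$, $\tilde H(\theta,\lambda)=\sum_iw_ih_i(\theta,\lambda)$. Known strong duality (used as a standing fact): for any distribution $\mathbb Q$ with finite $p$-th moment, $R^{\mathbb Q}_{\sigma,p}(\theta)=\inf_{\lambda\ge0}\{\lambda\sigma^p+\mathbb E^{\mathbb Q}[h(\theta,\lambda,\xi)]\}$. Define $\kappa(\theta)=\limsup_{\mathtt d(\xi,\xi_0)\to\infty}\frac{\ell(\theta,\xi)-\ell(\theta,\xi_0)}{\mathtt d^p(\xi,\xi_0)}$; it is assumed that $h_i(\theta,\kappa(\theta))<\infty$ for all $i,\theta$ (and $h_i(\theta,\lambda)=\infty$ for $\lambda<\kappa(\theta)$). Let $\rho=\max_i\mathtt d(\xi_i,\xi_0)$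 and $\tau(\theta)=\mathtt C(\theta)(2^{p-1}+\frac{1+2^{p-1}\rho^p}{\sigma^p})$. *)

theory Defs
  imports "HOL-Probability.Probability"
begin

definition dxi :: "(real^'m \<Rightarrow> real) \<Rightarrow> real \<Rightarrow> ((real^'m) \<times> real) \<Rightarrow> ((real^'m) \<times> real) \<Rightarrow> real" where
  "dxi nrm \<gamma> a b = nrm (fst a - fst b) + \<gamma> / 2 * \<bar>snd a - snd b\<bar>"

definition is_norm :: "(real^'m \<Rightarrow> real) \<Rightarrow> bool" where
  "is_norm nrm \<longleftrightarrow> (\<forall>x. nrm x = 0 \<longleftrightarrow> x = 0) \<and> (\<forall>c x. nrm (c *\<^sub>R x) = \<bar>c\<bar> * nrm x)
     \<and> (\<forall>x y. nrm (x + y) \<le> nrm x + nrm y)"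

definition complete_wrt :: "'a set \<Rightarrow> ('a \<Rightarrow> 'a \<Rightarrow> real) \<Rightarrow> bool" where
  "complete_wrt S d \<longleftrightarrow> (\<forall>s::nat \<Rightarrow> 'a. (\<forall>k. s k \<in> S) \<longrightarrow>
      (\<forall>e::real>0. \<exists>N. \<forall>a\<ge>N. \<forall>b\<ge>N. d (s a) (s b) < e) \<longrightarrow>
      (\<exists>x\<in>S. \<forall>e::real>0. \<exists>N. \<forall>k\<ge>N. d (s k) x < e))"

definition continuous_wrt :: "'a set \<Rightarrow> ('a \<Rightarrow> 'a \<Rightarrow> real) \<Rightarrow> ('a \<Rightarrow> real) \<Rightarrow> bool" where
  "continuous_wrt S d f \<longleftrightarrow> (\<forall>x\<in>S. \<forall>e::real>0. \<exists>\<delta>::real>0. \<forall>z\<in>S. d z x < \<delta> \<longrightarrow> \<bar>f z - f x\<bar> < e)"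

text \<open>Borel probability measures on Xi (represented on the ambient space, concentrated on Xi).\<close>
definition prob_on :: "'a::topological_space set \<Rightarrow> 'a measure \<Rightarrow> bool" where
  "prob_on S Q \<longleftrightarrow> prob_space Q \<and> sets Q = sets borel \<and> emeasure Q S = 1"

definition couplings :: "'a::topological_space measure \<Rightarrow> 'a measure \<Rightarrow> ('a \<times> 'a) measure set" where
  "couplings P P' = {\<pi>. prob_space \<pi> \<and> sets \<pi> = sets (borel \<Otimes>\<^sub>M borel)
      \<and> distr \<pi> borel fst = P \<and> distr \<pi> borel snd = P'}"

definition wass :: "('a::topological_space \<Rightarrow> 'a \<Rightarrow> real) \<Rightarrow> real \<Rightarrow> 'a measure \<Rightarrow> 'a measure \<Rightarrow> ennreal" where
  "wass d p P P' = (let c = (INF \<pi>\<in>couplings P P'. \<integral>\<^sup>+ z. ennreal (d (fst z) (snd z) powr p) \<partial>\<pi>)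
      in if c = \<infinity> then \<infinity> else ennreal (enn2real c powr (1 / p)))"

definition wball :: "'a::topological_space set \<Rightarrow> ('a \<Rightarrow> 'a \<Rightarrow> real) \<Rightarrow> real \<Rightarrow> real \<Rightarrow> 'a measure \<Rightarrow> 'a measure set" where
  "wball S d p \<sigma> Q = {Q'. prob_on S Q' \<and> wass d p Q Q' \<le> ennreal \<sigma>}"

definition risk :: "'a::topological_space set \<Rightarrow> ('a \<Rightarrow> 'a \<Rightarrow> real) \<Rightarrow> real \<Rightarrow> real \<Rightarrow> 'a measure \<Rightarrow> ('a \<Rightarrow> real) \<Rightarrow> ereal" where
  "risk S d p \<sigma> Q f = (SUP Q'\<in>wball S d p \<sigma> Q. enn2ereal (\<integral>\<^sup>+ x. ennreal (f x) \<partial>Q'))"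

definition hfun :: "'a set \<Rightarrow> ('a \<Rightarrow> 'a \<Rightarrow> real) \<Rightarrow> real \<Rightarrow> ('a \<Rightarrow> real) \<Rightarrow> real \<Rightarrow> 'a \<Rightarrow> ereal" where
  "hfun S d p f lam xi = (SUP \<zeta>\<in>S. ereal (f \<zeta> - lam * d \<zeta> xi powr p))"

text \<open>kappa = limsup_{d(xi,xi0) \<rightarrow> \<infinity>, xi in Xi} (f xi - f xi0) / d^p(xi, xi0).\<close>
definition kappa :: "'a set \<Rightarrow> ('a \<Rightarrow> 'a \<Rightarrow> real) \<Rightarrow> real \<Rightarrow> ('a \<Rightarrow> real) \<Rightarrow> 'a \<Rightarrow> ereal" where
  "kappa S d p f xi0 = Limsup (INF r::real. principal {xi\<in>S. r < d xi xi0})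
      (\<lambda>xi. ereal ((f xi - f xi0) / d xi xi0 powr p))"

definition wmeas :: "(nat \<Rightarrow> 'a::topological_space) \<Rightarrow> (nat \<Rightarrow> real) \<Rightarrow> nat \<Rightarrow> 'a measure" where
  "wmeas xs w n = measure_of UNIV (sets borel) (\<lambda>A. \<Sum>i<n. ennreal (w i) * indicator A (xs i))"

end

theory Submission imports Defs begin

lemma sets_wmeas[simp]: "sets (wmeas xs w n) = sets borel"
  unfolding wmeas_def using sets.sigma_sets_eq[of borel] by (simp add: sets_measure_of_conv)

lemma space_wmeas[simp]: "space (wmeas xs w n) = UNIV"
  unfolding wmeas_def by (rule space_measure_of) auto

lemma emeasure_wmeas:
  assumes "A \<in> sets borel"
  shows "emeasure (wmeas xs w n) A = (\<Sum>i<n. ennreal (w i) * indicator A (xs i))"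
  unfolding wmeas_def
proof (rule emeasure_measure_of_sigma[OF _ _ _ assms])
  show "sigma_algebra UNIV (sets borel)"
    using sets.sigma_algebra_axioms[of borel] by simp
  show "positive (sets borel) (\<lambda>A. \<Sum>i<n. ennreal (w i) * indicator A (xs i))"
    unfolding positive_def by simp
  show "countably_additive (sets borel) (\<lambda>A. \<Sum>i<n. ennreal (w i) * indicator A (xs i))"
    unfolding countably_additive_def
  proof (intro allI impI)
    fix A :: "nat \<Rightarrow> 'a set" assume "range A \<subseteq> sets borel" "disjoint_family A"
    have "(\<Sum>j. \<Sum>i<n. ennreal (w i) * indicator (A j) (xs i))
        = (\<Sum>i<n. \<Sum>j. ennreal (w i) * indicator (A j) (xs i))"
      by (rule suminf_sum) auto
    also have "\<dots> = (\<Sum>i<n. ennreal (w i) * (\<Sum>j. indicator (A j) (xs i)))"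
      by (simp add: ennreal_suminf_cmult)
    also have "\<dots> = (\<Sum>i<n. ennreal (w i) * indicator (\<Union>j. A j) (xs i))"
      using suminf_indicator[OF \<open>disjoint_family A\<close>] by simp
    finally show "(\<Sum>j. \<Sum>i<n. ennreal (w i) * indicator (A j) (xs i))
        = (\<Sum>i<n. ennreal (w i) * indicator (\<Union>(range A)) (xs i))" .
  qed
qed

lemma nn_integral_wmeas:
  fixes xs :: "nat \<Rightarrow> 'a::t1_space"
  shows "(\<integral>\<^sup>+x. f x \<partial>wmeas xs w n) = (\<Sum>i<n. ennreal (w i) * f (xs i))"
proof -
  define S where "S = xs ` {..<n}"
  have finS: "finite S" unfolding S_def by simp
  define g where "g x = (\<Sum>y\<in>S. f y * indicator {y} x)" for x
  have gS: "g x = f x" if "x \<in> S" for x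
  proof -
    have "g x = (\<Sum>y\<in>S. if y = x then f y else 0)"
      unfolding g_def by (rule sum.cong) (auto simp: indicator_def)
    also have "\<dots> = f x" using finS that by simp
    finally show ?thesis .
  qed
  have Nb: "UNIV - S \<in> sets borel"
    using finite_imp_closed[OF finS] by (auto intro: borel_open)
  have "emeasure (wmeas xs w n) (UNIV - S) = 0"
    using Nb by (simp add: emeasure_wmeas S_def)
  then have "AE x in wmeas xs w n. x \<in> S"
    using Nb by (intro AE_I'[of "UNIV - S"]) auto
  then have "AE x in wmeas xs w n. f x = g x" by eventually_elim (simp add: gS)
  then have "(\<integral>\<^sup>+x. f x \<partial>wmeas xs w n) = (\<integral>\<^sup>+x. g x \<partial>wmeas xs w n)"
    by (rule nn_integral_cong_AE)
  also have "\<dots> = (\<Sum>y\<in>S. \<integral>\<^sup>+x. f y * indicator {y} x \<partial>wmeas xs w n)"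
    unfolding g_def by (rule nn_integral_sum) (simp add: measurable_cong_sets[OF sets_wmeas refl])
  also have "\<dots> = (\<Sum>y\<in>S. f y * emeasure (wmeas xs w n) {y})"
    by (intro sum.cong refl nn_integral_cmult_indicator) auto
  also have "\<dots> = (\<Sum>y\<in>S. f y * (\<Sum>i<n. ennreal (w i) * indicator {y} (xs i)))"
    by (intro sum.cong refl) (simp add: emeasure_wmeas)
  also have "\<dots> = (\<Sum>y\<in>S. \<Sum>i<n. ennreal (w i) * (f y * indicator {y} (xs i)))"
    by (intro sum.cong refl) (simp only: sum_distrib_left mult_ac)
  also have "\<dots> = (\<Sum>i<n. \<Sum>y\<in>S. ennreal (w i) * (f y * indicator {y} (xs i)))"
    by (rule sum.swap)
  also have "\<dots> = (\<Sum>i<n. ennreal (w i) * (\<Sum>y\<in>S. f y * indicator {y} (xs i)))"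
    by (simp only: sum_distrib_left)
  also have "\<dots> = (\<Sum>i<n. ennreal (w i) * f (xs i))"
  proof (intro sum.cong refl)
    fix i assume "i \<in> {..<n}"
    then have "xs i \<in> S" by (simp add: S_def)
    from gS[OF this] show "ennreal (w i) * (\<Sum>y\<in>S. f y * indicator {y} (xs i)) = ennreal (w i) * f (xs i)"
      by (simp only: g_def)
  qed
  finally show ?thesis .
qed


lemma ws_nonneg:
  fixes h :: "nat \<Rightarrow> ereal"
  assumes "\<forall>i<n. u i \<ge> 0" "\<forall>i<n. h i \<ge> 0"
  shows "0 \<le> (\<Sum>i<n. ereal (u i) * h i)"
  using assms by (intro sum_nonneg) auto

lemma ws_bound:
  fixes h :: "nat \<Rightarrow> ereal"
  assumes "\<forall>i<n. u i \<ge> 0" "(\<Sum>i<n. u i) = 1" "\<forall>i<n. h i \<le> ereal B"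
  shows "(\<Sum>i<n. ereal (u i) * h i) \<le> ereal B"
proof -
  have "(\<Sum>i<n. ereal (u i) * h i) \<le> (\<Sum>i<n. ereal (u i) * ereal B)"
    using assms by (intro sum_mono ereal_mult_left_mono) auto
  also have "\<dots> = (\<Sum>i<n. ereal (u i * B))" by simp
  also have "\<dots> = ereal (\<Sum>i<n. u i * B)" by (simp add: sum_ereal)
  also have "\<dots> = ereal B" using assms(2) by (simp add: sum_distrib_right[symmetric])
  finally show ?thesis .
qed

lemma ws_inf:
  fixes h :: "nat \<Rightarrow> ereal"
  assumes "\<forall>i<n. u i \<ge> 0" "j < n" "u j > 0" "\<forall>i<n. h i = \<infinity>"
  shows "(\<Sum>i<n. ereal (u i) * h i) = \<infinity>"
proof -
  have r: "(\<Sum>i<n. ereal (u i) * h i) = ereal (u j) * h j + (\<Sum>i\<in>{..<n} - {j}. ereal (u i) * h i)"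
    using assms(2) by (intro sum.remove) auto
  have "0 \<le> (\<Sum>i\<in>{..<n} - {j}. ereal (u i) * h i)"
    using assms by (intro sum_nonneg) auto
  moreover have "ereal (u j) * h j = \<infinity>" using assms by simp
  ultimately show ?thesis using r by simp
qed

lemma integral_ws:
  fixes xs :: "nat \<Rightarrow> 'a::t1_space" and h :: "'a \<Rightarrow> ereal"
  assumes "\<forall>i<n. u i \<ge> 0" "\<forall>i<n. h (xs i) \<ge> 0"
  shows "enn2ereal (\<integral>\<^sup>+x. e2ennreal (h x) \<partial>wmeas xs u n) = (\<Sum>i<n. ereal (u i) * h (xs i))"
proof -
  have "enn2ereal (\<integral>\<^sup>+x. e2ennreal (h x) \<partial>wmeas xs u n)
     = enn2ereal (\<Sum>i<n. ennreal (u i) * e2ennreal (h (xs i)))"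
    by (simp add: nn_integral_wmeas)
  also have "\<dots> = (\<Sum>i<n. enn2ereal (ennreal (u i) * e2ennreal (h (xs i))))"
    by (rule sum_enn2ereal[symmetric]) simp
  also have "\<dots> = (\<Sum>i<n. ereal (u i) * h (xs i))"
    using assms by (intro sum.cong refl) (simp add: times_ennreal.rep_eq enn2ereal_e2ennreal)
  finally show ?thesis .
qed

lemma prob_wmeas:
  fixes xs :: "nat \<Rightarrow> 'a::t1_space"
  assumes "\<forall>i<n. u i \<ge> 0" "(\<Sum>i<n. u i) = 1" "S \<in> sets borel" "\<forall>i<n. xs i \<in> S"
  shows "prob_on S (wmeas xs u n)"
proof -
  have e: "emeasure (wmeas xs u n) A = 1" if "A \<in> sets borel" "\<forall>i<n. xs i \<in> A" for A
  proof -
    have "emeasure (wmeas xs u n) A = (\<Sum>i<n. ennreal (u i))"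
      using that by (simp add: emeasure_wmeas)
    also have "\<dots> = ennreal (\<Sum>i<n. u i)" using assms by (intro sum_ennreal) auto
    finally show ?thesis using assms by simp
  qed
  show ?thesis unfolding prob_on_def
    using e[of UNIV] e[OF assms(3,4)] by (auto intro: prob_spaceI)
qed

lemma powr_sum_le:
  fixes a b p :: real
  assumes "a \<ge> 0" "b \<ge> 0" "p \<ge> 1"
  shows "(a + b) powr p \<le> 2 powr (p - 1) * (a powr p + b powr p)"
proof -
  have two: "2 powr p = 2 * 2 powr (p - 1)"
    by (simp add: powr_diff)
  have g1: "2 powr (p - 1) \<ge> 1" using assms by (simp add: ge_one_powr_ge_zero)
  show ?thesis
  proof (cases "a = 0 \<or> b = 0")
    case True
    then show ?thesis using g1 assms
      by (auto intro!: mult_right_mono[of 1, simplified] simp: mult_le_cancel_right1)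
  next
    case False
    then have ab: "a > 0" "b > 0" using assms by auto
    have "((1/2) * a + (1 - 1/2) * b) powr p \<le> (1/2) * a powr p + (1 - 1/2) * b powr p"
      using convex_onD[OF powr_convex[OF assms(3)], of "1/2" a b] ab by simp
    then have c: "((a + b) / 2) powr p \<le> (a powr p + b powr p) / 2"
      by (simp add: field_simps)
    have "(a + b) powr p = 2 powr p * ((a + b) / 2) powr p"
      using ab by (simp add: powr_divide)
    also have "\<dots> \<le> 2 powr p * ((a powr p + b powr p) / 2)"
      by (intro mult_left_mono c) simp
    also have "\<dots> = 2 powr (p - 1) * (a powr p + b powr p)" by (simp add: two)
    finally show ?thesis .
  qed
qed

theorem theorem1:
  fixes nrm :: "real^'m \<Rightarrow> real" and \<gamma> :: real
    and X :: "(real^'m) set" and Y :: "real set"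
    and p \<sigma> \<epsilon> :: real and n :: nat
    and xs :: "nat \<Rightarrow> (real^'m) \<times> real" and xi0 :: "(real^'m) \<times> real"
    and loss :: "real^'d \<Rightarrow> (real^'m) \<times> real \<Rightarrow> real"
    and \<Theta> :: "(real^'d) set" and C :: "real^'d \<Rightarrow> real"
    and w :: "nat \<Rightarrow> real"
    and \<Xi> d \<rho> \<tau> h H Ht \<kappa> Pn Pt R
  assumes Xi_def: "\<Xi> = X \<times> Y"
    and d_def: "d = dxi nrm \<gamma>"
    and rho_def: "\<rho> = Max ((\<lambda>i. d (xs i) xi0) ` {..<n})"
    and tau_def: "\<tau> = (\<lambda>\<theta>. C \<theta> * (2 powr (p - 1) + (1 + 2 powr (p - 1) * \<rho> powr p) / \<sigma> powr p))"
    and h_def: "h = (\<lambda>\<theta> lam xi. hfun \<Xi> d p (loss \<theta>) lam xi)"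
    and H_def: "H = (\<lambda>\<theta> lam. (\<Sum>i<n. h \<theta> lam (xs i)) / ereal (real n))"
    and Ht_def: "Ht = (\<lambda>\<theta> lam. \<Sum>i<n. ereal (w i) * h \<theta> lam (xs i))"
    and kappa_def: "\<kappa> = (\<lambda>\<theta>. kappa \<Xi> d p (loss \<theta>) xi0)"
    and Pn_def: "Pn = wmeas xs (\<lambda>i. 1 / real n) n"
    and Pt_def: "Pt = wmeas xs w n"
    and R_def: "R = (\<lambda>Q \<theta>. risk \<Xi> d p \<sigma> Q (loss \<theta>))"
    and norm: "is_norm nrm" and gamma: "\<gamma> > 0"
    and complete: "complete_wrt \<Xi> d"
    and p: "p \<ge> 1" and sigma: "\<sigma> > 0"
    and n: "n \<ge> 1" and data: "\<forall>i<n. xs i \<in> \<Xi>" and xi0: "xi0 \<in> \<Xi>"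
    and loss_nonneg: "\<forall>\<theta>. \<forall>\<xi>\<in>\<Xi>. loss \<theta> \<xi> \<ge> 0"
    and loss_cont: "\<forall>\<theta>\<in>\<Theta>. continuous_wrt \<Xi> d (loss \<theta>)"
    and C_cont: "continuous_on \<Theta> C" and C_pos: "\<forall>\<theta>\<in>\<Theta>. C \<theta> > 0"
    and growth: "\<forall>\<theta>\<in>\<Theta>. \<forall>\<xi>\<in>\<Xi>. loss \<theta> \<xi> \<le> C \<theta> * (1 + d \<xi> xi0 powr p)"
    and kappa_fin: "\<forall>\<theta>\<in>\<Theta>. \<forall>i<n. \<exists>k. \<kappa> \<theta> = ereal k \<and> h \<theta> k (xs i) < \<infinity>"
    and kappa_below: "\<forall>\<theta>\<in>\<Theta>. \<forall>i<n. \<forall>lam. ereal lam < \<kappa> \<theta> \<longrightarrow> h \<theta> lam (xs i) = \<infinity>"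
    and duality: "\<forall>Q. prob_on \<Xi> Q \<and> (\<integral>\<^sup>+ \<xi>. ennreal (d \<xi> xi0 powr p) \<partial>Q) < \<infinity> \<longrightarrow>
        (\<forall>\<theta>\<in>\<Theta>. R Q \<theta> = (INF lam\<in>{0::real..}. ereal (lam * \<sigma> powr p)
            + enn2ereal (\<integral>\<^sup>+ \<xi>. e2ennreal (h \<theta> lam \<xi>) \<partial>Q)))"
    and eps: "0 < \<epsilon>" "\<epsilon> < 1"
    and w_nonneg: "\<forall>i<n. w i \<ge> 0" and w_sum: "(\<Sum>i<n. w i) = 1"
    and coreset: "\<forall>\<theta>\<in>\<Theta>. \<forall>lam::real. \<kappa> \<theta> \<le> ereal lam \<and> lam \<le> \<tau> \<theta> \<longrightarrow>
        ereal (1 - \<epsilon>) * H \<theta> lam \<le> Ht \<theta> lam \<and> Ht \<theta> lam \<le> ereal (1 + \<epsilon>) * H \<theta> lam"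
  shows "\<forall>\<theta>\<in>\<Theta>. ereal (1 - \<epsilon>) * R Pn \<theta> \<le> R Pt \<theta> \<and> R Pt \<theta> \<le> ereal (1 + \<epsilon>) * R Pn \<theta>"
proof (intro ballI)
  fix \<theta> assume th: "\<theta> \<in> \<Theta>"
  show "ereal (1 - \<epsilon>) * R Pn \<theta> \<le> R Pt \<theta> \<and> R Pt \<theta> \<le> ereal (1 + \<epsilon>) * R Pn \<theta>"
  proof (cases "\<Xi> \<in> sets borel")
    case False
    have "wball \<Xi> d p \<sigma> Q = {}" for Q :: "((real^'m) \<times> real) measure"
      proof -
      { fix Q' assume "Q' \<in> wball \<Xi> d p \<sigma> Q"
        then have "sets Q' = sets borel" "emeasure Q' \<Xi> = 1"
          unfolding wball_def prob_on_def by blast+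
        moreover have "emeasure Q' \<Xi> = 0"
          using False \<open>sets Q' = sets borel\<close> by (intro emeasure_notin_sets) simp
        ultimately have False by simp }
      then show ?thesis by blast
    qed
    then have "R Q \<theta> = -\<infinity>" for Q by (simp add: R_def risk_def bot_ereal_def)
    then show ?thesis using eps by simp
  next
    case True
    have nrm0: "nrm 0 = 0" using norm unfolding is_norm_def by blast
    have nrm_neg: "nrm (- x) = nrm x" for x
      using norm unfolding is_norm_def by (metis abs_minus_cancel abs_one mult_1 scaleR_minus1_left)
    have nrm_tri: "nrm (x + y) \<le> nrm x + nrm y" for x y
      using norm unfolding is_norm_def by blast
    have nrm_nn: "nrm x \<ge> 0" for x
      using nrm_tri[of x "-x"] nrm_neg[of x] nrm0 by simp
    have d_nn: "d a b \<ge> 0" for a b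
      using nrm_nn gamma by (simp add: d_def dxi_def)
    have d_self: "d a a = 0" for a
      using nrm0 by (simp add: d_def dxi_def)
    have d_tri: "d a c \<le> d a b + d b c" for a b c
    proof -
      have "nrm (fst a - fst c) \<le> nrm (fst a - fst b) + nrm (fst b - fst c)"
        using nrm_tri[of "fst a - fst b" "fst b - fst c"] by simp
      moreover have "\<gamma> / 2 * \<bar>snd a - snd c\<bar> \<le> \<gamma> / 2 * \<bar>snd a - snd b\<bar> + \<gamma> / 2 * \<bar>snd b - snd c\<bar>"
        using gamma by (simp add: distrib_left[symmetric] mult_left_mono)
      ultimately show ?thesis by (simp add: d_def dxi_def)
    qed
    have rho_ge: "d (xs i) xi0 \<le> \<rho>" if "i < n" for i
      unfolding rho_def using that by (intro Max_ge) auto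
    have rho_nn: "\<rho> \<ge> 0" using rho_ge[of 0] d_nn[of "xs 0" xi0] n by simp
    define sp where "sp = \<sigma> powr p"
    have sp: "sp > 0" using sigma by (simp add: sp_def)
    define l0 where "l0 = C \<theta> * 2 powr (p - 1)"
    define B where "B = C \<theta> * (1 + 2 powr (p - 1) * \<rho> powr p)"
    have Cpos: "C \<theta> > 0" using C_pos th by blast
    have l0_nn: "l0 \<ge> 0" using Cpos by (simp add: l0_def)
    have tau_eq: "\<tau> \<theta> * sp = l0 * sp + B"
      using sp by (simp add: tau_def l0_def B_def sp_def field_simps)
    have l0_le: "l0 \<le> \<tau> \<theta>"
    proof -
      have "B \<ge> 0" using Cpos by (simp add: B_def)
      then have "l0 * sp \<le> \<tau> \<theta> * sp" using tau_eq by simp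
      then show ?thesis using sp by simp
    qed
    have h_nn: "0 \<le> h \<theta> lam (xs i)" if "i < n" for lam i
    proof -
      have xi: "xs i \<in> \<Xi>" using data that by blast
      have "ereal (loss \<theta> (xs i) - lam * d (xs i) (xs i) powr p) \<le> h \<theta> lam (xs i)"
        unfolding h_def hfun_def using xi by (rule SUP_upper)
      moreover have "0 \<le> loss \<theta> (xs i)" using loss_nonneg xi by blast
      ultimately show ?thesis by (simp add: d_self) (metis ereal_less_eq(5) order_trans)
    qed
    have h_bd: "h \<theta> l0 (xs i) \<le> ereal B" if "i < n" for i
      unfolding h_def hfun_def
    proof (rule SUP_least)
      fix z assume z: "z \<in> \<Xi>"
      have "loss \<theta> z \<le> C \<theta> * (1 + d z xi0 powr p)" using growth[rule_format, OF th z] .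
      also have "d z xi0 powr p \<le> (d z (xs i) + d (xs i) xi0) powr p"
        using d_tri[of z xi0 "xs i"] d_nn p by (intro powr_mono2) auto
      also have "\<dots> \<le> 2 powr (p - 1) * (d z (xs i) powr p + d (xs i) xi0 powr p)"
        using d_nn p by (intro powr_sum_le) auto
      also have "d (xs i) xi0 powr p \<le> \<rho> powr p"
        using rho_ge[OF that] d_nn p by (intro powr_mono2) auto
      finally have "loss \<theta> z \<le> C \<theta> * (1 + 2 powr (p - 1) * (d z (xs i) powr p + \<rho> powr p))"
        using Cpos by (simp add: mult_left_mono)
      then show "ereal (loss \<theta> z - l0 * d z (xs i) powr p) \<le> ereal B"
        by (simp add: l0_def B_def algebra_simps)
    qed
    have n_pos: "real n > 0" using n by simp
    have Hn: "H \<theta> lam = (\<Sum>i<n. ereal (1 / real n) * h \<theta> lam (xs i))" for lam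
    proof -
      have "H \<theta> lam = (\<Sum>i<n. h \<theta> lam (xs i)) * ereal (1 / real n)"
        using n_pos by (simp add: H_def divide_ereal_def inverse_eq_divide)
      also have "\<dots> = (\<Sum>i<n. h \<theta> lam (xs i) * ereal (1 / real n))"
        using h_nn by (intro sum_ereal_left_distrib) auto
      finally show ?thesis by (simp add: mult.commute)
    qed
    have un: "\<forall>i<n. (1 / real n) \<ge> 0" "(\<Sum>i<n. 1 / real n) = 1" using n_pos by auto
    have wn: "\<forall>i<n. w i \<ge> 0" "(\<Sum>i<n. w i) = 1" using w_nonneg w_sum by auto
    have Rform: "R (wmeas xs u n) \<theta> = (INF lam\<in>{0::real..}. ereal (lam * sp) + (\<Sum>i<n. ereal (u i) * h \<theta> lam (xs i)))"
      if u: "\<forall>i<n. u i \<ge> 0" "(\<Sum>i<n. u i) = 1" for u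
    proof -
      have P: "prob_on \<Xi> (wmeas xs u n)" using prob_wmeas[OF u True] data by blast
      have M: "(\<integral>\<^sup>+ \<xi>. ennreal (d \<xi> xi0 powr p) \<partial>wmeas xs u n) < \<infinity>"
        by (simp add: nn_integral_wmeas ennreal_sum_less_top ennreal_mult_less_top)
      have "R (wmeas xs u n) \<theta> = (INF lam\<in>{0::real..}. ereal (lam * \<sigma> powr p)
            + enn2ereal (\<integral>\<^sup>+ \<xi>. e2ennreal (h \<theta> lam \<xi>) \<partial>wmeas xs u n))"
        using duality[rule_format, OF conjI[OF P M] th] .
      also have "\<dots> = (INF lam\<in>{0::real..}. ereal (lam * sp) + (\<Sum>i<n. ereal (u i) * h \<theta> lam (xs i)))"
        using u h_nn by (intro INF_cong refl) (simp add: integral_ws sp_def)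
      finally show ?thesis .
    qed
    define Fn where "Fn lam = ereal (lam * sp) + H \<theta> lam" for lam
    define Gn where "Gn lam = ereal (lam * sp) + Ht \<theta> lam" for lam
    have RPn: "R Pn \<theta> = (INF lam\<in>{0::real..}. Fn lam)"
      unfolding Pn_def Rform[OF un] Fn_def Hn ..
    have RPt: "R Pt \<theta> = (INF lam\<in>{0::real..}. Gn lam)"
      unfolding Pt_def Rform[OF wn] Gn_def Ht_def ..
    have Hnn: "0 \<le> H \<theta> lam" for lam unfolding Hn using un h_nn by (intro ws_nonneg) auto
    have Htnn: "0 \<le> Ht \<theta> lam" for lam unfolding Ht_def using wn h_nn by (intro ws_nonneg) auto
    have HB: "H \<theta> l0 \<le> ereal B" unfolding Hn using un h_bd by (intro ws_bound) auto
    have HtB: "Ht \<theta> l0 \<le> ereal B" unfolding Ht_def using wn h_bd by (intro ws_bound) auto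
    obtain j where j: "j < n" "w j > 0"
    proof -
      have "\<exists>j<n. w j > 0"
      proof (rule ccontr)
        assume "\<not> ?thesis"
        then have "(\<Sum>i<n. w i) \<le> 0" by (intro sum_nonpos) auto
        then show False using wn by simp
      qed
      then show ?thesis using that by blast
    qed
    have hinf: "\<forall>i<n. h \<theta> lam (xs i) = \<infinity>" if "ereal lam < \<kappa> \<theta>" for lam
      using kappa_below[rule_format, OF th _ that] by simp
    have Hinf: "H \<theta> lam = \<infinity>" if "ereal lam < \<kappa> \<theta>" for lam
      unfolding Hn using un n hinf[OF that] by (intro ws_inf[of _ _ 0]) auto
    have Htinf: "Ht \<theta> lam = \<infinity>" if "ereal lam < \<kappa> \<theta>" for lam
      unfolding Ht_def using wn j hinf[OF that] by (intro ws_inf[of _ _ j]) auto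
    have Fnn: "0 \<le> Fn lam" if "lam \<ge> 0" for lam
      using that sp Hnn[of lam] by (simp add: Fn_def)
    have Gnn: "0 \<le> Gn lam" if "lam \<ge> 0" for lam
      using that sp Htnn[of lam] by (simp add: Gn_def)
    have F0: "Fn l0 \<le> ereal (\<tau> \<theta> * sp)"
      unfolding Fn_def tau_eq using add_left_mono[OF HB, of "ereal (l0 * sp)"] by simp
    have G0: "Gn l0 \<le> ereal (\<tau> \<theta> * sp)"
      unfolding Gn_def tau_eq using add_left_mono[OF HtB, of "ereal (l0 * sp)"] by simp
    have bigF: "ereal (\<tau> \<theta> * sp) \<le> Fn lam" if "\<tau> \<theta> < lam" for lam
    proof -
      have "\<tau> \<theta> * sp \<le> lam * sp" using that sp by simp
      then show ?thesis using Hnn[of lam] unfolding Fn_def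
        by (metis add_mono add.right_neutral ereal_less_eq(3))
    qed
    have bigG: "ereal (\<tau> \<theta> * sp) \<le> Gn lam" if "\<tau> \<theta> < lam" for lam
    proof -
      have "\<tau> \<theta> * sp \<le> lam * sp" using that sp by simp
      then show ?thesis using Htnn[of lam] unfolding Gn_def
        by (metis add_mono add.right_neutral ereal_less_eq(3))
    qed
    define Fs where "Fs = (INF lam\<in>{0::real..}. Fn lam)"
    define Gs where "Gs = (INF lam\<in>{0::real..}. Gn lam)"
    have Fs_nn: "0 \<le> Fs" unfolding Fs_def using Fnn by (intro INF_greatest) auto
    have Gs_nn: "0 \<le> Gs" unfolding Gs_def using Gnn by (intro INF_greatest) auto
    have Fs_le: "Fs \<le> Fn lam" if "lam \<ge> 0" for lam unfolding Fs_def using that by (intro INF_lower) auto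
    have Gs_le: "Gs \<le> Gn lam" if "lam \<ge> 0" for lam unfolding Gs_def using that by (intro INF_lower) auto
    have cases3: "ereal lam < \<kappa> \<theta> \<or> (\<kappa> \<theta> \<le> ereal lam \<and> lam \<le> \<tau> \<theta>) \<or> \<tau> \<theta> < lam" for lam
      by auto
    have cor: "ereal (1 - \<epsilon>) * H \<theta> lam \<le> Ht \<theta> lam \<and> Ht \<theta> lam \<le> ereal (1 + \<epsilon>) * H \<theta> lam"
      if "\<kappa> \<theta> \<le> ereal lam" "lam \<le> \<tau> \<theta>" for lam
      using coreset[rule_format, OF th conjI[OF that]] .
    have lower: "ereal (1 - \<epsilon>) * Fs \<le> Gs"
      unfolding Gs_def
    proof (rule INF_greatest)
      fix lam :: real assume "lam \<in> {0..}"
      then have lam: "lam \<ge> 0" by simp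
      show "ereal (1 - \<epsilon>) * Fs \<le> Gn lam"
      proof -
        consider "ereal lam < \<kappa> \<theta>" | "\<kappa> \<theta> \<le> ereal lam" "lam \<le> \<tau> \<theta>" | "\<tau> \<theta> < lam"
          using cases3 by blast
        then show ?thesis
        proof cases
          case 1 then show ?thesis by (simp add: Gn_def Htinf)
        next
          case 2
          have "ereal (1 - \<epsilon>) * Fs \<le> ereal (1 - \<epsilon>) * Fn lam"
            using Fs_le[OF lam] eps by (intro ereal_mult_left_mono) auto
          also have "\<dots> = ereal ((1 - \<epsilon>) * (lam * sp)) + ereal (1 - \<epsilon>) * H \<theta> lam"
            unfolding Fn_def by (simp add: ereal_distrib_left)
          also have "\<dots> \<le> ereal (lam * sp) + Ht \<theta> lam"
          proof (rule add_mono)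
            show "ereal ((1 - \<epsilon>) * (lam * sp)) \<le> ereal (lam * sp)"
              using mult_left_le_one_le[of "lam * sp" "1 - \<epsilon>"] eps lam sp by simp
            show "ereal (1 - \<epsilon>) * H \<theta> lam \<le> Ht \<theta> lam" using cor[OF 2] by blast
          qed
          finally show ?thesis by (simp add: Gn_def)
        next
          case 3
          have "ereal (1 - \<epsilon>) * Fs \<le> ereal 1 * Fs"
            using eps Fs_nn by (intro ereal_mult_right_mono) auto
          also have "\<dots> \<le> Fn l0" using Fs_le[OF l0_nn] by simp
          also have "\<dots> \<le> ereal (\<tau> \<theta> * sp)" by (rule F0)
          also have "\<dots> \<le> Gn lam" using bigG[OF 3] .
          finally show ?thesis .
        qed
      qed
    qed
    have upper0: "ereal (1 / (1 + \<epsilon>)) * Gs \<le> Fs"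
      unfolding Fs_def
    proof (rule INF_greatest)
      fix lam :: real assume "lam \<in> {0..}"
      then have lam: "lam \<ge> 0" by simp
      show "ereal (1 / (1 + \<epsilon>)) * Gs \<le> Fn lam"
      proof -
        consider "ereal lam < \<kappa> \<theta>" | "\<kappa> \<theta> \<le> ereal lam" "lam \<le> \<tau> \<theta>" | "\<tau> \<theta> < lam"
          using cases3 by blast
        then show ?thesis
        proof cases
          case 1 then show ?thesis by (simp add: Fn_def Hinf)
        next
          case 2
          have "Gs \<le> Gn lam" by (rule Gs_le[OF lam])
          also have "\<dots> \<le> ereal ((1 + \<epsilon>) * (lam * sp)) + ereal (1 + \<epsilon>) * H \<theta> lam"
            unfolding Gn_def
          proof (rule add_mono)
            have "0 \<le> \<epsilon> * (lam * sp)" using eps lam sp by simp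
            then show "ereal (lam * sp) \<le> ereal ((1 + \<epsilon>) * (lam * sp))"
              by (simp add: algebra_simps)
            show "Ht \<theta> lam \<le> ereal (1 + \<epsilon>) * H \<theta> lam" using cor[OF 2] by blast
          qed
          also have "\<dots> = ereal (1 + \<epsilon>) * Fn lam"
            unfolding Fn_def by (simp add: ereal_distrib_left)
          finally have "Gs \<le> ereal (1 + \<epsilon>) * Fn lam" .
          then have "ereal (1 / (1 + \<epsilon>)) * Gs \<le> ereal (1 / (1 + \<epsilon>)) * (ereal (1 + \<epsilon>) * Fn lam)"
            using eps by (intro ereal_mult_left_mono) auto
          also have "\<dots> = Fn lam"
            using eps by (simp add: mult.assoc[symmetric])
          finally show ?thesis .
        next
          case 3
          have "ereal (1 / (1 + \<epsilon>)) * Gs \<le> ereal 1 * Gs"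
            using eps Gs_nn by (intro ereal_mult_right_mono) auto
          also have "\<dots> \<le> Gn l0" using Gs_le[OF l0_nn] by simp
          also have "\<dots> \<le> ereal (\<tau> \<theta> * sp)" by (rule G0)
          also have "\<dots> \<le> Fn lam" using bigF[OF 3] .
          finally show ?thesis .
        qed
      qed
    qed
    have upper: "Gs \<le> ereal (1 + \<epsilon>) * Fs"
    proof -
      have "Gs = ereal (1 + \<epsilon>) * (ereal (1 / (1 + \<epsilon>)) * Gs)"
        using eps by (simp add: mult.assoc[symmetric])
      also have "\<dots> \<le> ereal (1 + \<epsilon>) * Fs"
        using upper0 eps by (intro ereal_mult_left_mono) auto
      finally show ?thesis .
    qed
    show ?thesis using lower upper RPn RPt by (simp add: Fs_def Gs_def)
  qed
qed

end
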